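(* Let $X$ be a finite set and $f$ a closure operator on $X$. The set $S(f)$ of closed sets of $f$ is a chain with respect to set inclusion if and only if there is a weak order $\succeq$ on $X$ generating $f$, i.e. such that $f(A)=H(\succeq,h_A)$ for every $A\subseteq X$. Moreover, the weak order generating $f$ is unique.
   Context: A closure operator on $X$ is a map $f:2^X\to 2^X$ with $A\subseteq f(A)$, $f(\emptyset)=\emptyset$, $f(f(A))=f(A)$, and $A\subseteq B\Rightarrow f(A)\subseteq f(B)$; $S(f)=\{A: f(A)=A\}$. A weak order is a complete and transitive binary relation. For a weak order $\succeq$ and $A\subseteq X$, $h_A(\succeq)=\{x\in A: x\succeq y\ \forall y\in A\}$; for nonempty $A$, $H(\succeq,h_A)=\{x\in X: h_A(\succeq)\succeq x\}$ (i.e. $x$ is weakly below the $\succeq$-maximal elements of $A$), and $H(\succeq,h_\emptyset)=\emptyset$. *)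

theory Defs
  imports Main
begin

definition closure_operator :: "'a set \<Rightarrow> ('a set \<Rightarrow> 'a set) \<Rightarrow> bool" where
  "closure_operator X f \<longleftrightarrow>
     (\<forall>A. A \<subseteq> X \<longrightarrow> f A \<subseteq> X) \<and>
     (\<forall>A. A \<subseteq> X \<longrightarrow> A \<subseteq> f A) \<and>
     f {} = {} \<and>
     (\<forall>A. A \<subseteq> X \<longrightarrow> f (f A) = f A) \<and>
     (\<forall>A B. A \<subseteq> B \<and> B \<subseteq> X \<longrightarrow> f A \<subseteq> f B)"

definition closed_sets :: "'a set \<Rightarrow> ('a set \<Rightarrow> 'a set) \<Rightarrow> 'a set set" where
  "closed_sets X f = {A. A \<subseteq> X \<and> f A = A}"

text \<open>A weak order on X: a complete and transitive relation on X; (x,y) \<in> R means x \<succeq> y.\<close>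
definition weak_order_on :: "'a set \<Rightarrow> ('a \<times> 'a) set \<Rightarrow> bool" where
  "weak_order_on X R \<longleftrightarrow> R \<subseteq> X \<times> X \<and>
     (\<forall>x\<in>X. \<forall>y\<in>X. (x, y) \<in> R \<or> (y, x) \<in> R) \<and> trans R"

definition hmax :: "('a \<times> 'a) set \<Rightarrow> 'a set \<Rightarrow> 'a set" where
  "hmax R A = {x \<in> A. \<forall>y\<in>A. (x, y) \<in> R}"

definition Hset :: "'a set \<Rightarrow> ('a \<times> 'a) set \<Rightarrow> 'a set \<Rightarrow> 'a set" where
  "Hset X R A = (if A = {} then {} else {x \<in> X. \<exists>z\<in>hmax R A. (z, x) \<in> R})"

definition generates :: "'a set \<Rightarrow> ('a \<times> 'a) set \<Rightarrow> ('a set \<Rightarrow> 'a set) \<Rightarrow> bool" where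
  "generates X R f \<longleftrightarrow> (\<forall>A. A \<subseteq> X \<longrightarrow> f A = Hset X R A)"

end

theory Submission
  imports Defs
begin

lemma uniq:
  assumes "weak_order_on X R" "generates X R f" "y \<in> X"
  shows "x \<in> f {y} \<longleftrightarrow> (y, x) \<in> R"
proof -
  have refl: "(y, y) \<in> R" using assms(1,3) unfolding weak_order_on_def by blast
  have "hmax R {y} = {y}" using refl unfolding hmax_def by auto
  hence "f {y} = {x \<in> X. (y, x) \<in> R}"
    using assms(2,3) unfolding generates_def Hset_def by auto
  thus ?thesis using assms(1) unfolding weak_order_on_def by auto
qed

lemma bwd_chain:
  assumes "weak_order_on X R" "generates X R f"
  shows "chain\<^sub>\<subseteq> (closed_sets X f)"
  unfolding chain_subset_def
proof (intro ballI)
  fix C D assume C: "C \<in> closed_sets X f" and D: "D \<in> closed_sets X f"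
  have key: "D \<subseteq> C" if C: "C \<in> closed_sets X f" and D: "D \<in> closed_sets X f"
     and z: "z \<in> hmax R C" and w: "w \<in> hmax R D" and zw: "(z, w) \<in> R" and ne: "C \<noteq> {}" "D \<noteq> {}"
     for C D z w
  proof
    fix x assume x: "x \<in> D"
    have CX: "C \<subseteq> X" "f C = C" "D \<subseteq> X" "f D = D" using C D unfolding closed_sets_def by auto
    have "D = Hset X R D" using CX assms(2) unfolding generates_def by metis
    with x ne obtain w' where w': "w' \<in> hmax R D" "(w', x) \<in> R" "x \<in> X"
      unfolding Hset_def by auto
    have "(w, w') \<in> R" using w w' unfolding hmax_def by auto
    hence "(z, x) \<in> R" using zw w' assms(1) unfolding weak_order_on_def by (meson transD)
    moreover have "C = Hset X R C" using CX assms(2) unfolding generates_def by metis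
    ultimately show "x \<in> C" using ne z \<open>x \<in> X\<close> unfolding Hset_def by auto
  qed
  show "C \<subseteq> D \<or> D \<subseteq> C"
  proof (cases "C = {} \<or> D = {}")
    case True thus ?thesis by auto
  next
    case False
    have CX: "C \<subseteq> X" "f C = C" "D \<subseteq> X" "f D = D" using C D unfolding closed_sets_def by auto
    have hC: "C = Hset X R C" and hD: "D = Hset X R D" using CX assms(2) unfolding generates_def by metis+
    have "hmax R C \<noteq> {}"
    proof
      assume "hmax R C = {}" hence "Hset X R C = {}" unfolding Hset_def by auto
      thus False using hC False by auto
    qed
    moreover have "hmax R D \<noteq> {}"
    proof
      assume "hmax R D = {}" hence "Hset X R D = {}" unfolding Hset_def by auto
      thus False using hD False by auto
    qed
    ultimately obtain z w where z: "z \<in> hmax R C" and w: "w \<in> hmax R D" by blast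
    have "z \<in> X" "w \<in> X" using z w CX unfolding hmax_def by auto
    hence "(z, w) \<in> R \<or> (w, z) \<in> R" using assms(1) unfolding weak_order_on_def by auto
    thus ?thesis using key[OF C D z w] key[OF D C w z] False by blast
  qed
qed

lemma fwd:
  assumes fin: "finite X" and cl: "closure_operator X f" and ch: "chain\<^sub>\<subseteq> (closed_sets X f)"
  shows "\<exists>R. weak_order_on X R \<and> generates X R f"
proof -
  have fX: "\<And>A. A \<subseteq> X \<Longrightarrow> f A \<subseteq> X" and ext: "\<And>A. A \<subseteq> X \<Longrightarrow> A \<subseteq> f A"
    and f0: "f {} = {}" and idem: "\<And>A. A \<subseteq> X \<Longrightarrow> f (f A) = f A"
    and mono: "\<And>A B. A \<subseteq> B \<Longrightarrow> B \<subseteq> X \<Longrightarrow> f A \<subseteq> f B"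
    using cl unfolding closure_operator_def by auto
  have cs: "y \<in> X \<Longrightarrow> f {y} \<in> closed_sets X f" for y
    using fX idem unfolding closed_sets_def by auto
  have cmp: "y \<in> X \<Longrightarrow> x \<in> X \<Longrightarrow> f {x} \<subseteq> f {y} \<or> f {y} \<subseteq> f {x}" for x y
    using ch cs unfolding chain_subset_def by blast
  have sub: "y \<in> X \<Longrightarrow> x \<in> f {y} \<Longrightarrow> f {x} \<subseteq> f {y}" for x y
    using mono[of "{x}" "f {y}"] idem[of "{y}"] fX[of "{y}"] by auto
  have selfin: "y \<in> X \<Longrightarrow> y \<in> f {y}" for y using ext[of "{y}"] by auto
  define R where "R = {(y, x). y \<in> X \<and> x \<in> f {y}}"
  have wo: "weak_order_on X R"
    unfolding weak_order_on_def
  proof (intro conjI)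
    show "R \<subseteq> X \<times> X" using fX unfolding R_def by auto
    show "\<forall>x\<in>X. \<forall>y\<in>X. (x, y) \<in> R \<or> (y, x) \<in> R"
      using cmp selfin unfolding R_def by blast
    show "trans R" unfolding R_def trans_def using sub by blast
  qed
  have "generates X R f" unfolding generates_def
  proof (intro allI impI)
    fix A assume AX: "A \<subseteq> X"
    show "f A = Hset X R A"
    proof (cases "A = {}")
      case True thus ?thesis using f0 unfolding Hset_def by simp
    next
      case False
      have "finite A" using AX fin finite_subset by blast
      have "\<exists>a\<in>A. A \<subseteq> f {a}" using \<open>finite A\<close> False AX
      proof (induction A rule: finite_ne_induct)
        case (singleton x) thus ?case using selfin by auto
      next
        case (insert x F)
        then obtain a where a: "a \<in> F" "F \<subseteq> f {a}" by auto
        have "x \<in> X" "a \<in> X" using insert a by auto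
        from cmp[OF this] show ?case
        proof
          assume "f {x} \<subseteq> f {a}" thus ?thesis using a selfin[OF \<open>x \<in> X\<close>] by auto
        next
          assume "f {a} \<subseteq> f {x}" thus ?thesis using a selfin[OF \<open>x \<in> X\<close>] by auto
        qed
      qed
      then obtain a where a: "a \<in> A" "A \<subseteq> f {a}" by blast
      have eq: "f {z} = f A" if "z \<in> A" "A \<subseteq> f {z}" for z
      proof
        show "f {z} \<subseteq> f A" using mono[of "{z}" A] that AX by auto
        have "f A \<subseteq> f (f {z})" using mono[of A "f {z}"] that AX fX[of "{z}"] by auto
        thus "f A \<subseteq> f {z}" using idem[of "{z}"] that AX by auto
      qed
      have hm: "hmax R A = {z \<in> A. A \<subseteq> f {z}}" unfolding hmax_def R_def using AX by auto
      have "Hset X R A = {x \<in> X. \<exists>z\<in>A. A \<subseteq> f {z} \<and> x \<in> f {z}}"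
        unfolding Hset_def hm using False AX unfolding R_def by auto
      also have "\<dots> = f A"
      proof
        show "{x \<in> X. \<exists>z\<in>A. A \<subseteq> f {z} \<and> x \<in> f {z}} \<subseteq> f A" using eq by blast
        show "f A \<subseteq> {x \<in> X. \<exists>z\<in>A. A \<subseteq> f {z} \<and> x \<in> f {z}}" using eq[OF a] a fX[OF AX] by blast
      qed
      finally show ?thesis by simp
    qed
  qed
  with wo show ?thesis by blast
qed

theorem proposition4:
  fixes X :: "'a set" and f :: "'a set \<Rightarrow> 'a set"
  assumes "finite X" and "closure_operator X f"
  shows "(chain\<^sub>\<subseteq> (closed_sets X f) \<longleftrightarrow> (\<exists>R. weak_order_on X R \<and> generates X R f))
     \<and> (\<forall>R1 R2. weak_order_on X R1 \<and> generates X R1 f \<and> weak_order_on X R2 \<and> generates X R2 f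
                \<longrightarrow> R1 = R2)"
proof (intro conjI iffI allI impI)
  show "chain\<^sub>\<subseteq> (closed_sets X f) \<Longrightarrow> \<exists>R. weak_order_on X R \<and> generates X R f"
    using fwd assms by blast
  show "\<exists>R. weak_order_on X R \<and> generates X R f \<Longrightarrow> chain\<^sub>\<subseteq> (closed_sets X f)"
    using bwd_chain by blast
  fix R1 R2 assume h: "weak_order_on X R1 \<and> generates X R1 f \<and> weak_order_on X R2 \<and> generates X R2 f"
  have s1: "R1 \<subseteq> X \<times> X" "R2 \<subseteq> X \<times> X" using h unfolding weak_order_on_def by auto
  show "R1 = R2"
  proof (intro set_eqI)
    fix p show "p \<in> R1 \<longleftrightarrow> p \<in> R2"
    proof (cases p)
      case (Pair y x)
      show ?thesis
      proof (cases "y \<in> X")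
        case True thus ?thesis using uniq[of X R1 f y x] uniq[of X R2 f y x] h Pair by auto
      next
        case False thus ?thesis using s1 Pair by auto
      qed
    qed
  qed
qed

end
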